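(* Let $\mathbf{Meas}$ be the category of measurable spaces and measurable maps, and $\mathcal{G}_{\le1}$ the subprobability Giry monad on it: $\mathcal{G}_{\le1}(X)$ is the set of subprobability measures $\phi\colon\Sigma_X\to[0,1]$ (countably additive, $\phi(\emptyset)=0$), with the least $\sigma$-algebra making all evaluations $\phi\mapsto\phi(M)$, $M\in\Sigma_X$, measurable. Let $\mathcal{K}\ell(\mathcal{G}_{\le1})$ be its Kleisli category: morphisms $X\to Y$ are measurable $f\colon X\to\mathcal{G}_{\le1}(Y)$, with composition $(g\odot f)(x)(N)=\int g(-)(N)\,\mathrm{d}f(x)$. Define $\square\colon\mathcal{K}\ell(\mathcal{G}_{\le1})\to\mathbf{PoSets}^{\mathrm{op}}$ by letting $\square(X)$ be the set of measurable functions $X\to[0,1]$ with the pointwise order, and for $f\colon X\to\mathcal{G}_{\le1}(Y)$ and measurable $q\colon Y\to[0,1]$, $\square(f)(q)(x)=\int q\,\mathrm{d}f(x)+(1-f(x)(Y))$. Then the forgetful functor $U\colon\int\square\to\mathcal{K}\ell(\mathcal{G}_{\le1})$ has a left adjoint $0$ with $0(X)=(X,\text{const }0)$ and a right adjoint $1$ with $1(X)=(X,\text{const }1)$; moreover there is a functor (comprehension) $\int\square\to\mathcal{K}\ell(\mathcal{G}_{\le1})$ with $(X,p)\mapsto\{x\in X\mid p(x)=1\}$ which is right adjoint to $1$, and a functor (quotient) with $(X,p)\mapsto X/p=\{x\in X\mid p(x)\neq1\}$ which is left adjoint to $0$, where these subsets carry the subspace $\sigma$-algebra.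
   Context: For a functor $F\colon\mathcal{B}\to\mathbf{PoSets}^{\mathrm{op}}$, $\int F$ is the category with objects $(X,P)$, $P\in F(X)$, and morphisms $f\colon(X,P)\to(Y,Q)$ the morphisms $f\colon X\to Y$ of $\mathcal{B}$ with $P\le F(f)(Q)$; the forgetful functor sends $(X,P)\mapsto X$, $f\mapsto f$; $0$ and $1$ act as identity on morphisms. *)

theory Defs
  imports "HOL-Probability.Probability"
begin

text \<open>Subprobability measures on Y: measures with the sigma-algebra of Y and total mass at most 1.
  (Unlike the library's subprob_space, the null measure on an empty space is allowed.)\<close>
definition subprobs :: "'b measure \<Rightarrow> 'b measure set" where
  "subprobs Y = {M. sets M = sets Y \<and> emeasure M (space M) \<le> 1}"

definition giry_le1 :: "'b measure \<Rightarrow> 'b measure measure" where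
  "giry_le1 Y = sigma (subprobs Y)
     {{M \<in> subprobs Y. measure M A \<in> B} | A B. A \<in> sets Y \<and> B \<in> sets (borel :: real measure)}"

definition kl_hom :: "'a measure \<Rightarrow> 'b measure \<Rightarrow> ('a \<Rightarrow> 'b measure) \<Rightarrow> bool" where
  "kl_hom X Y f \<longleftrightarrow> f \<in> X \<rightarrow>\<^sub>M giry_le1 Y"

definition kl_comp :: "'c measure \<Rightarrow> ('b \<Rightarrow> 'c measure) \<Rightarrow> ('a \<Rightarrow> 'b measure) \<Rightarrow> 'a \<Rightarrow> 'c measure" where
  "kl_comp Z g f = (\<lambda>x. measure_of (space Z) (sets Z) (\<lambda>N. \<integral>\<^sup>+ y. emeasure (g y) N \<partial>(f x)))"

definition kl_id :: "'a measure \<Rightarrow> 'a \<Rightarrow> 'a measure" where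
  "kl_id X = return X"

definition kl_eq :: "'a measure \<Rightarrow> ('a \<Rightarrow> 'b measure) \<Rightarrow> ('a \<Rightarrow> 'b measure) \<Rightarrow> bool" where
  "kl_eq X f g \<longleftrightarrow> (\<forall>x\<in>space X. f x = g x)"

definition pred_on :: "'a measure \<Rightarrow> ('a \<Rightarrow> real) \<Rightarrow> bool" where
  "pred_on X p \<longleftrightarrow> p \<in> borel_measurable X \<and> (\<forall>x\<in>space X. 0 \<le> p x \<and> p x \<le> 1)"

definition box :: "'b measure \<Rightarrow> ('a \<Rightarrow> 'b measure) \<Rightarrow> ('b \<Rightarrow> real) \<Rightarrow> 'a \<Rightarrow> real" where
  "box Y f q = (\<lambda>x. (\<integral> y. q y \<partial>(f x)) + (1 - measure (f x) (space Y)))"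

definition groth_hom :: "'a measure \<Rightarrow> ('a \<Rightarrow> real) \<Rightarrow> 'b measure \<Rightarrow> ('b \<Rightarrow> real)
    \<Rightarrow> ('a \<Rightarrow> 'b measure) \<Rightarrow> bool" where
  "groth_hom X p Y q f \<longleftrightarrow> kl_hom X Y f \<and> (\<forall>x\<in>space X. p x \<le> box Y f q x)"

definition cmpr :: "'a measure \<Rightarrow> ('a \<Rightarrow> real) \<Rightarrow> 'a measure" where
  "cmpr X p = restrict_space X {x \<in> space X. p x = 1}"

definition quot :: "'a measure \<Rightarrow> ('a \<Rightarrow> real) \<Rightarrow> 'a measure" where
  "quot X p = restrict_space X {x \<in> space X. p x \<noteq> 1}"

definition cmpr_counit :: "'a measure \<Rightarrow> ('a \<Rightarrow> real) \<Rightarrow> 'a \<Rightarrow> 'a measure" where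
  "cmpr_counit X p = (\<lambda>x. return X x)"

definition quot_unit :: "'a measure \<Rightarrow> ('a \<Rightarrow> real) \<Rightarrow> 'a \<Rightarrow> 'a measure" where
  "quot_unit X p = (\<lambda>x. scale_measure (ennreal (1 - p x)) (return (quot X p) x))"

end

theory Submission
  imports Defs
begin

lemma giry_gen_sub: "{{M \<in> subprobs Y. measure M A \<in> B} | A B. A \<in> sets Y \<and> B \<in> sets (borel :: real measure)} \<subseteq> Pow (subprobs Y)"
  by auto

lemma space_giry[simp]: "space (giry_le1 Y) = subprobs Y"
  unfolding giry_le1_def by (rule space_measure_of[OF giry_gen_sub])

lemma kl_hom_in: "kl_hom X Y f \<Longrightarrow> x \<in> space X \<Longrightarrow> f x \<in> subprobs Y"
  unfolding kl_hom_def by (metis measurable_space space_giry)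

lemma subprobs_D:
  assumes "M \<in> subprobs Y"
  shows "sets M = sets Y" "space M = space Y" "emeasure M (space Y) \<le> 1" "finite_measure M"
    "measure M (space Y) \<le> 1" "\<And>A. emeasure M A = ennreal (measure M A)"
proof -
  show s: "sets M = sets Y" using assms by (simp add: subprobs_def)
  show sp: "space M = space Y" using sets_eq_imp_space_eq[OF s] .
  show e: "emeasure M (space Y) \<le> 1" using assms sp by (simp add: subprobs_def)
  show fm: "finite_measure M"
  proof (rule finite_measureI)
    have "emeasure M (space M) \<le> 1" using e sp by simp
    thus "emeasure M (space M) \<noteq> \<infinity>" by (auto simp: top_unique)
  qed
  show "measure M (space Y) \<le> 1" using e sp fm
    by (simp add: finite_measure.emeasure_eq_measure)
  show "\<And>A. emeasure M A = ennreal (measure M A)" using fm finite_measure.emeasure_eq_measure by blast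
qed

lemma eval_measurable:
  assumes "A \<in> sets Y"
  shows "(\<lambda>M. measure M A) \<in> borel_measurable (giry_le1 Y)"
proof (rule measurableI)
  fix B :: "real set" assume "B \<in> sets borel"
  hence "{M \<in> subprobs Y. measure M A \<in> B} \<in> sets (giry_le1 Y)"
    unfolding giry_le1_def using assms by (subst sets_measure_of[OF giry_gen_sub]) (auto intro!: sigma_sets.Basic)
  moreover have "(\<lambda>M. measure M A) -` B \<inter> space (giry_le1 Y) = {M \<in> subprobs Y. measure M A \<in> B}" by auto
  ultimately show "(\<lambda>M. measure M A) -` B \<inter> space (giry_le1 Y) \<in> sets (giry_le1 Y)" by simp
qed auto

lemma kl_hom_eval:
  assumes "kl_hom X Y f" "A \<in> sets Y"
  shows "(\<lambda>x. measure (f x) A) \<in> borel_measurable X"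
    "(\<lambda>x. emeasure (f x) A) \<in> borel_measurable X"
proof -
  show m: "(\<lambda>x. measure (f x) A) \<in> borel_measurable X"
    using measurable_comp[OF assms(1)[unfolded kl_hom_def] eval_measurable[OF assms(2)]] by (simp add: o_def)
  show "(\<lambda>x. emeasure (f x) A) \<in> borel_measurable X"
    by (rule measurable_cong[THEN iffD2, OF _ measurable_compose[OF m measurable_ennreal]])
       (use assms in \<open>metis kl_hom_in subprobs_D(6)\<close>)
qed

lemma kl_homI:
  assumes "\<And>x. x \<in> space X \<Longrightarrow> f x \<in> subprobs Y"
    "\<And>A. A \<in> sets Y \<Longrightarrow> (\<lambda>x. measure (f x) A) \<in> borel_measurable X"
  shows "kl_hom X Y f"
  unfolding kl_hom_def giry_le1_def
proof (rule measurable_measure_of[OF giry_gen_sub])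
  show "f \<in> space X \<rightarrow> subprobs Y" using assms(1) by auto
  fix S assume "S \<in> {{M \<in> subprobs Y. measure M A \<in> B} | A B. A \<in> sets Y \<and> B \<in> sets (borel :: real measure)}"
  then obtain A B where S: "S = {M \<in> subprobs Y. measure M A \<in> B}" "A \<in> sets Y" "B \<in> sets (borel :: real measure)" by blast
  have "f -` S \<inter> space X = (\<lambda>x. measure (f x) A) -` B \<inter> space X" using assms(1) S(1) by auto
  thus "f -` S \<inter> space X \<in> sets X" using measurable_sets[OF assms(2)[OF S(2)] S(3)] by simp
qed

lemma return_kl_hom: "kl_hom X X (return X)"
proof (rule kl_homI)
  fix x assume "x \<in> space X"
  have "emeasure (return X x) (space (return X x)) = indicator (space X) x" by simp
  also have "\<dots> \<le> 1" by (simp add: indicator_def)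
  finally show "return X x \<in> subprobs X" unfolding subprobs_def by simp
next
  fix A assume A: "A \<in> sets X"
  show "(\<lambda>x. measure (return X x) A) \<in> borel_measurable X"
  proof -
    have "(\<lambda>x. measure (return X x) A) = indicator A" using measure_return[OF A] by (simp add: fun_eq_iff)
    thus ?thesis using borel_measurable_indicator[OF A] by simp
  qed
qed

lemma comp_return_left:
  assumes "(\<lambda>z. z) \<in> measurable M Z"
  shows "measure_of (space Z) (sets Z) (\<lambda>N. \<integral>\<^sup>+ z. emeasure (return Z z) N \<partial>M) = distr M Z (\<lambda>z. z)"
  unfolding distr_def
proof (rule measure_of_eq[OF sets.space_closed])
  fix a assume "a \<in> sigma_sets (space Z) (sets Z)"
  hence a: "a \<in> sets Z" by (simp add: sets.sigma_sets_eq)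
  have am: "a \<inter> space M \<in> sets M" using measurable_sets[OF assms a] by (simp add: Int_commute)
  have "(\<integral>\<^sup>+ z. emeasure (return Z z) a \<partial>M) = (\<integral>\<^sup>+ z. indicator (a \<inter> space M) z \<partial>M)"
    by (rule nn_integral_cong) (simp add: emeasure_return[OF a] split: split_indicator)
  also have "\<dots> = emeasure M (a \<inter> space M)" using am by simp
  finally show "(\<integral>\<^sup>+ z. emeasure (return Z z) a \<partial>M) = emeasure M ((\<lambda>z. z) -` a \<inter> space M)" by simp
qed

lemma kl_comp_id_left:
  assumes "(\<lambda>z. z) \<in> measurable (h x) Z"
  shows "kl_comp Z (kl_id Z) h x = distr (h x) Z (\<lambda>z. z)"
  unfolding kl_comp_def kl_id_def using comp_return_left[OF assms] by simp

lemma kl_comp_id_right: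
  assumes g: "kl_hom X Y g" and x: "x \<in> space X"
  shows "kl_comp Y g (kl_id X) x = g x"
proof -
  have gx: "g x \<in> subprobs Y" using kl_hom_in[OF g x] .
  have "kl_comp Y g (kl_id X) x = measure_of (space Y) (sets Y) (emeasure (g x))"
    unfolding kl_comp_def kl_id_def
  proof (rule measure_of_eq[OF sets.space_closed])
    fix a assume "a \<in> sigma_sets (space Y) (sets Y)"
    hence a: "a \<in> sets Y" by (simp add: sets.sigma_sets_eq)
    show "(\<integral>\<^sup>+ y. emeasure (g y) a \<partial>return X x) = emeasure (g x) a"
      by (rule nn_integral_return[OF x kl_hom_eval(2)[OF g a]])
  qed
  also have "\<dots> = g x" using measure_of_of_measure[of "g x"] subprobs_D(1,2)[OF gx] by simp
  finally show ?thesis .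
qed

lemma subprob_integral_nonneg:
  assumes "M \<in> subprobs Y" "pred_on Y q"
  shows "0 \<le> (\<integral>y. q y \<partial>M)"
  using assms subprobs_D(2)[OF assms(1)] unfolding pred_on_def
  by (intro integral_nonneg_AE AE_I2) auto

lemma part1:
  fixes X :: "'a measure" and Y :: "'b measure"
  shows "(pred_on X (\<lambda>_. 0) \<and> kl_hom X X (kl_id X) \<and>
     (\<forall>q f. pred_on Y q \<longrightarrow> kl_hom X Y f \<longrightarrow>
        (\<exists>g. groth_hom X (\<lambda>_. 0) Y q g \<and> kl_eq X (kl_comp Y g (kl_id X)) f \<and>
           (\<forall>g'. groth_hom X (\<lambda>_. 0) Y q g' \<and> kl_eq X (kl_comp Y g' (kl_id X)) f
                  \<longrightarrow> kl_eq X g' g))))"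
proof (intro conjI allI impI)
  show "pred_on X (\<lambda>_. 0)" by (simp add: pred_on_def)
  show "kl_hom X X (kl_id X)" by (simp add: kl_id_def return_kl_hom)
  fix q f assume q: "pred_on Y q" and f: "kl_hom X Y f"
  show "\<exists>g. groth_hom X (\<lambda>_. 0) Y q g \<and> kl_eq X (kl_comp Y g (kl_id X)) f \<and>
           (\<forall>g'. groth_hom X (\<lambda>_. 0) Y q g' \<and> kl_eq X (kl_comp Y g' (kl_id X)) f
                  \<longrightarrow> kl_eq X g' g)"
  proof (intro exI conjI allI impI)
    show "groth_hom X (\<lambda>_. 0) Y q f"
      unfolding groth_hom_def box_def
    proof (intro conjI f ballI)
      fix x assume x: "x \<in> space X"
      have fx: "f x \<in> subprobs Y" using kl_hom_in[OF f x] .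
      show "0 \<le> (\<integral>y. q y \<partial>f x) + (1 - measure (f x) (space Y))"
        using subprob_integral_nonneg[OF fx q] subprobs_D(5)[OF fx] by simp
    qed
    show "kl_eq X (kl_comp Y f (kl_id X)) f" using kl_comp_id_right[OF f] by (simp add: kl_eq_def)
    fix g' assume "groth_hom X (\<lambda>_. 0) Y q g' \<and> kl_eq X (kl_comp Y g' (kl_id X)) f"
    thus "kl_eq X g' f" using kl_comp_id_right[of X Y g'] by (simp add: kl_eq_def groth_hom_def)
  qed
qed

lemma part2:
  fixes X :: "'a measure" and Y :: "'b measure"
  shows "(pred_on Y (\<lambda>_. 1) \<and> kl_hom Y Y (kl_id Y) \<and>
     (\<forall>p f. pred_on X p \<longrightarrow> kl_hom X Y f \<longrightarrow>
        (\<exists>g. groth_hom X p Y (\<lambda>_. 1) g \<and> kl_eq X (kl_comp Y (kl_id Y) g) f \<and>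
           (\<forall>g'. groth_hom X p Y (\<lambda>_. 1) g' \<and> kl_eq X (kl_comp Y (kl_id Y) g') f
                  \<longrightarrow> kl_eq X g' g))))"
proof (intro conjI allI impI)
  show "pred_on Y (\<lambda>_. 1)" by (simp add: pred_on_def)
  show "kl_hom Y Y (kl_id Y)" by (simp add: kl_id_def return_kl_hom)
  have key: "kl_comp Y (kl_id Y) g x = g x" if g: "kl_hom X Y g" and x: "x \<in> space X" for g x
  proof -
    have gx: "g x \<in> subprobs Y" using kl_hom_in[OF g x] .
    have "(\<lambda>z. z) \<in> measurable (g x) Y"
      using measurable_ident_sets[OF subprobs_D(1)[OF gx]] .
    hence "kl_comp Y (kl_id Y) g x = distr (g x) Y (\<lambda>z. z)" by (rule kl_comp_id_left)
    also have "\<dots> = g x" by (rule distr_id2) (simp add: subprobs_D(1)[OF gx])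
    finally show ?thesis .
  qed
  fix p f assume p: "pred_on X p" and f: "kl_hom X Y f"
  show "\<exists>g. groth_hom X p Y (\<lambda>_. 1) g \<and> kl_eq X (kl_comp Y (kl_id Y) g) f \<and>
           (\<forall>g'. groth_hom X p Y (\<lambda>_. 1) g' \<and> kl_eq X (kl_comp Y (kl_id Y) g') f
                  \<longrightarrow> kl_eq X g' g)"
  proof (intro exI conjI allI impI)
    show "groth_hom X p Y (\<lambda>_. 1) f"
      unfolding groth_hom_def box_def
    proof (intro conjI f ballI)
      fix x assume x: "x \<in> space X"
      have fx: "f x \<in> subprobs Y" using kl_hom_in[OF f x] .
      show "p x \<le> (\<integral>y. 1 \<partial>f x) + (1 - measure (f x) (space Y))"
        using p x subprobs_D(2)[OF fx] by (simp add: pred_on_def)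
    qed
    show "kl_eq X (kl_comp Y (kl_id Y) f) f" using key[OF f] by (simp add: kl_eq_def)
    fix g' assume "groth_hom X p Y (\<lambda>_. 1) g' \<and> kl_eq X (kl_comp Y (kl_id Y) g') f"
    thus "kl_eq X g' f" using key[of g'] by (simp add: kl_eq_def groth_hom_def)
  qed
qed


lemma pred_set_sets:
  assumes "pred_on X p"
  shows "{x \<in> space X. p x = 1} \<in> sets X" "{x \<in> space X. p x \<noteq> 1} \<in> sets X"
proof -
  have pm: "p \<in> borel_measurable X" using assms by (simp add: pred_on_def)
  have "p -` {1} \<inter> space X \<in> sets X" by (rule measurable_sets[OF pm]) simp
  moreover have "p -` {1} \<inter> space X = {x \<in> space X. p x = 1}" by auto
  ultimately show a: "{x \<in> space X. p x = 1} \<in> sets X" by simp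
  have "space X - {x \<in> space X. p x = 1} \<in> sets X" using a by auto
  moreover have "space X - {x \<in> space X. p x = 1} = {x \<in> space X. p x \<noteq> 1}" by auto
  ultimately show "{x \<in> space X. p x \<noteq> 1} \<in> sets X" by simp
qed

lemma distr_restrict_emeasure:
  assumes S: "S \<in> sets X" and M: "sets M = sets (restrict_space X S)" and A: "A \<in> sets X"
  shows "emeasure (distr M X (\<lambda>z. z)) A = emeasure M (A \<inter> S)"
proof -
  have S': "S \<inter> space X \<in> sets X" using S by (simp add: sets.Int_space_eq2)
  have sp: "space M = S" using sets_eq_imp_space_eq[OF M] S by simp
  have id: "(\<lambda>z. z) \<in> measurable M X"
    by (subst measurable_cong_sets[OF M refl]) (rule measurable_restrict_space1[OF measurable_ident_sets[OF refl]])
  show ?thesis using emeasure_distr[OF id A] sp by (simp add: Int_commute)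
qed

lemma part3:
  fixes X :: "'a measure" and Y :: "'b measure"
  assumes p: "pred_on X p"
  shows "groth_hom (cmpr X p) (\<lambda>_. 1) X p (cmpr_counit X p) \<and>
      (\<forall>(g :: 'b \<Rightarrow> 'a measure). groth_hom Y (\<lambda>_. 1) X p g \<longrightarrow>
        (\<exists>h. kl_hom Y (cmpr X p) h \<and> kl_eq Y (kl_comp X (cmpr_counit X p) h) g \<and>
           (\<forall>h'. kl_hom Y (cmpr X p) h' \<and> kl_eq Y (kl_comp X (cmpr_counit X p) h') g
                  \<longrightarrow> kl_eq Y h' h)))"
proof -
  define S where "S = {x \<in> space X. p x = 1}"
  have pm: "p \<in> borel_measurable X" and p01: "\<And>x. x \<in> space X \<Longrightarrow> 0 \<le> p x \<and> p x \<le> 1"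
    using p by (auto simp: pred_on_def)
  have S: "S \<in> sets X" unfolding S_def by (rule pred_set_sets(1)[OF p])
  have SX: "S \<subseteq> space X" by (auto simp: S_def)
  have S': "S \<inter> space X \<in> sets X" using S SX by (simp add: Int_absorb2)
  have c: "cmpr X p = restrict_space X S" by (simp add: cmpr_def S_def)
  have spc: "space (cmpr X p) = S" using c S by simp
  have setsc: "\<And>A. A \<in> sets (cmpr X p) \<longleftrightarrow> A \<subseteq> S \<and> A \<in> sets X"
    using c sets_restrict_space_iff[OF S'] by simp
  have cu: "cmpr_counit X p = kl_id X" by (simp add: cmpr_counit_def kl_id_def fun_eq_iff)
  have comp: "kl_comp X (cmpr_counit X p) h y = distr (h y) X (\<lambda>z. z)"
    if h: "kl_hom Y (cmpr X p) h" and y: "y \<in> space Y" for h y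
  proof -
    have hs: "sets (h y) = sets (restrict_space X S)" using subprobs_D(1)[OF kl_hom_in[OF h y]] c by simp
    have "(\<lambda>z. z) \<in> measurable (h y) X"
      by (subst measurable_cong_sets[OF hs refl]) (rule measurable_restrict_space1[OF measurable_ident_sets[OF refl]])
    thus ?thesis unfolding cu by (rule kl_comp_id_left)
  qed
  show ?thesis
  proof (intro conjI allI impI)
    show "groth_hom (cmpr X p) (\<lambda>_. 1) X p (cmpr_counit X p)"
      unfolding groth_hom_def
    proof (intro conjI ballI)
      show "kl_hom (cmpr X p) X (cmpr_counit X p)"
        using return_kl_hom[of X] unfolding kl_hom_def c cu kl_id_def by (rule measurable_restrict_space1)
      fix x assume "x \<in> space (cmpr X p)"
      hence x: "x \<in> S" "x \<in> space X" using spc SX by auto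
      have "box X (cmpr_counit X p) p x = p x + (1 - 1)"
        unfolding box_def cmpr_counit_def
        using integral_return[OF x(2) pm] measure_return[OF sets.top[of X], of x] x(2) by simp
      thus "1 \<le> box X (cmpr_counit X p) p x" using x by (simp add: S_def)
    qed
    fix g :: "'b \<Rightarrow> 'a measure"
    assume gh: "groth_hom Y (\<lambda>_. 1) X p g"
    have g: "kl_hom Y X g" and gbox: "\<And>y. y \<in> space Y \<Longrightarrow> 1 \<le> box X g p y"
      using gh by (auto simp: groth_hom_def)
    have null: "emeasure (g y) (space X - S) = 0" if y: "y \<in> space Y" for y
    proof -
      define M where "M = g y"
      have Ms: "M \<in> subprobs X" using kl_hom_in[OF g y] by (simp add: M_def)
      interpret finite_measure M using subprobs_D(4)[OF Ms] .
      have sM: "sets M = sets X" and spM: "space M = space X" using subprobs_D(1,2)[OF Ms] by auto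
      have pmM: "p \<in> borel_measurable M" by (subst measurable_cong_sets[OF sM refl]) (rule pm)
      have ip: "integrable M p"
        by (rule integrable_const_bound[where B=1]) (use p01 spM pmM in auto)
      have "1 \<le> (\<integral>x. p x \<partial>M) + (1 - measure M (space X))" using gbox[OF y] by (simp add: box_def M_def)
      hence le: "measure M (space X) \<le> (\<integral>x. p x \<partial>M)" by simp
      have "(\<integral>x. 1 - p x \<partial>M) = (\<integral>x. 1 \<partial>M) - (\<integral>x. p x \<partial>M)"
        using ip by (rule Bochner_Integration.integral_diff[OF integrable_const])
      also have "\<dots> = measure M (space X) - (\<integral>x. p x \<partial>M)" using spM by simp
      finally have i0: "(\<integral>x. 1 - p x \<partial>M) \<le> 0" using le by simp
      have nn: "AE x in M. 0 \<le> 1 - p x" using p01 spM by (intro AE_I2) auto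
      have "0 \<le> (\<integral>x. 1 - p x \<partial>M)" by (rule integral_nonneg_AE[OF nn])
      hence "(\<integral>x. 1 - p x \<partial>M) = 0" using i0 by simp
      hence "AE x in M. 1 - p x = 0"
        using integral_nonneg_eq_0_iff_AE[OF Bochner_Integration.integrable_diff[OF integrable_const ip] nn] by blast
      moreover have "space X - S \<in> sets M" using S sM by auto
      moreover have "{x \<in> space M. \<not> (1 - p x = 0)} = space X - S" using spM by (auto simp: S_def)
      ultimately show ?thesis unfolding M_def using AE_iff_measurable[of "space X - S" "g y"] by (simp add: M_def)
    qed
    define h where "h y = restrict_space (g y) S" for y
    have gs: "sets (g y) = sets X" "space (g y) = space X" if "y \<in> space Y" for y
      using subprobs_D(1,2)[OF kl_hom_in[OF g that]] by auto
    have hsets: "sets (h y) = sets (cmpr X p)" if "y \<in> space Y" for y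
      unfolding h_def c by (rule sets_restrict_space_cong[OF gs(1)[OF that]])
    have hspace: "space (h y) = S" if "y \<in> space Y" for y
      unfolding h_def using gs(2)[OF that] SX by (auto simp: space_restrict_space)
    have hem: "emeasure (h y) A = emeasure (g y) A" if "y \<in> space Y" "A \<subseteq> S" for y A
      unfolding h_def by (rule emeasure_restrict_space) (use S' gs[OF that(1)] that(2) in auto)
    have hk: "kl_hom Y (cmpr X p) h"
    proof (rule kl_homI)
      fix y assume y: "y \<in> space Y"
      have "emeasure (h y) (space (h y)) = emeasure (g y) S" using hem[OF y] hspace[OF y] by simp
      also have "\<dots> \<le> emeasure (g y) (space X)" using emeasure_space[of "g y" S] gs(2)[OF y] by simp
      also have "\<dots> \<le> 1" using subprobs_D(3)[OF kl_hom_in[OF g y]] .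
      finally show "h y \<in> subprobs (cmpr X p)" using hsets[OF y] by (simp add: subprobs_def)
    next
      fix A assume A: "A \<in> sets (cmpr X p)"
      hence A': "A \<subseteq> S" "A \<in> sets X" using setsc by auto
      show "(\<lambda>y. measure (h y) A) \<in> borel_measurable Y"
        by (rule measurable_cong[THEN iffD2, OF _ kl_hom_eval(1)[OF g A'(2)]])
           (simp add: measure_def hem A'(1))
    qed
    have hcomp: "distr (h y) X (\<lambda>z. z) = g y" if y: "y \<in> space Y" for y
    proof (rule measure_eqI)
      show "sets (distr (h y) X (\<lambda>z. z)) = sets (g y)" using gs(1)[OF y] by simp
      fix A assume "A \<in> sets (distr (h y) X (\<lambda>z. z))"
      hence A: "A \<in> sets X" by simp
      have "emeasure (distr (h y) X (\<lambda>z. z)) A = emeasure (h y) (A \<inter> S)"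
        by (rule distr_restrict_emeasure[OF S _ A]) (use hsets[OF y] c in simp)
      also have "\<dots> = emeasure (g y) (A \<inter> S)" using hem[OF y] by simp
      also have "\<dots> = emeasure (g y) ((A \<inter> S) \<union> (A - S))"
      proof (rule emeasure_Un_null_set[symmetric])
        show "A \<inter> S \<in> sets (g y)" using A S gs(1)[OF y] by auto
        have "space X - S \<in> null_sets (g y)" using null[OF y] S gs(1)[OF y] by auto
        thus "A - S \<in> null_sets (g y)"
          by (rule null_sets_subset) (use A S gs(1)[OF y] sets.sets_into_space[OF A] in auto)
      qed
      also have "(A \<inter> S) \<union> (A - S) = A" by auto
      finally show "emeasure (distr (h y) X (\<lambda>z. z)) A = emeasure (g y) A" .
    qed
    show "\<exists>h. kl_hom Y (cmpr X p) h \<and> kl_eq Y (kl_comp X (cmpr_counit X p) h) g \<and>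
           (\<forall>h'. kl_hom Y (cmpr X p) h' \<and> kl_eq Y (kl_comp X (cmpr_counit X p) h') g
                  \<longrightarrow> kl_eq Y h' h)"
    proof (intro exI conjI allI impI)
      show "kl_hom Y (cmpr X p) h" by (rule hk)
      show "kl_eq Y (kl_comp X (cmpr_counit X p) h) g" unfolding kl_eq_def using comp[OF hk] hcomp by simp
      fix h' assume "kl_hom Y (cmpr X p) h' \<and> kl_eq Y (kl_comp X (cmpr_counit X p) h') g"
      hence h': "kl_hom Y (cmpr X p) h'" and e: "\<And>y. y \<in> space Y \<Longrightarrow> distr (h' y) X (\<lambda>z. z) = g y"
        using comp by (auto simp: kl_eq_def)
      show "kl_eq Y h' h" unfolding kl_eq_def
      proof
        fix y assume y: "y \<in> space Y"
        have h's: "sets (h' y) = sets (cmpr X p)" using subprobs_D(1)[OF kl_hom_in[OF h' y]] .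
        show "h' y = h y"
        proof (rule measure_eqI)
          show "sets (h' y) = sets (h y)" using h's hsets[OF y] by simp
          fix A assume "A \<in> sets (h' y)"
          hence A: "A \<subseteq> S" "A \<in> sets X" using h's setsc by auto
          have "emeasure (h' y) A = emeasure (distr (h' y) X (\<lambda>z. z)) A"
            using distr_restrict_emeasure[OF S _ A(2), of "h' y"] h's c A(1) by (simp add: Int_absorb2)
          also have "\<dots> = emeasure (distr (h y) X (\<lambda>z. z)) A" using e[OF y] hcomp[OF y] by simp
          also have "\<dots> = emeasure (h y) A"
            using distr_restrict_emeasure[OF S _ A(2), of "h y"] hsets[OF y] c A(1) by (simp add: Int_absorb2)
          finally show "emeasure (h' y) A = emeasure (h y) A" .
        qed
      qed
    qed
  qed
qed


lemma scale_inv: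
  assumes "(r::real) > 0"
  shows "scale_measure (ennreal (1/r)) (scale_measure (ennreal r) M) = M"
proof -
  have "ennreal (1/r) * ennreal r = 1" using assms by (simp add: ennreal_mult[symmetric])
  thus ?thesis by simp
qed

lemma part4:
  fixes X :: "'a measure" and Y :: "'b measure"
  assumes p: "pred_on X p"
  shows "groth_hom X p (quot X p) (\<lambda>_. 0) (quot_unit X p) \<and>
      (\<forall>f. groth_hom X p Y (\<lambda>_. 0) f \<longrightarrow>
        (\<exists>g. kl_hom (quot X p) Y g \<and> kl_eq X (kl_comp Y g (quot_unit X p)) f \<and>
           (\<forall>g'. kl_hom (quot X p) Y g' \<and> kl_eq X (kl_comp Y g' (quot_unit X p)) f
                  \<longrightarrow> kl_eq (quot X p) g' g)))"
proof -
  define Q where "Q = {x \<in> space X. p x \<noteq> 1}"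
  have pm: "p \<in> borel_measurable X" and p01: "\<And>x. x \<in> space X \<Longrightarrow> 0 \<le> p x \<and> p x \<le> 1"
    using p by (auto simp: pred_on_def)
  have Q: "Q \<in> sets X" unfolding Q_def by (rule pred_set_sets(2)[OF p])
  have QX: "Q \<subseteq> space X" by (auto simp: Q_def)
  have Q': "Q \<inter> space X \<in> sets X" using Q QX by (simp add: Int_absorb2)
  have c: "quot X p = restrict_space X Q" by (simp add: quot_def Q_def)
  have spq: "space (quot X p) = Q" using c Q by simp
  have setsq: "\<And>A. A \<in> sets (quot X p) \<longleftrightarrow> A \<subseteq> Q \<and> A \<in> sets X"
    using c sets_restrict_space_iff[OF Q'] by simp
  have pl1: "p x < 1" if "x \<in> Q" for x using that p01[of x] by (auto simp: Q_def)
  have qu: "quot_unit X p x = scale_measure (ennreal (1 - p x)) (return (quot X p) x)" for x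
    by (simp add: quot_unit_def)
  have mqu: "measure (quot_unit X p x) A = (1 - p x) * indicator A x"
    if "x \<in> space X" "A \<in> sets (quot X p)" for x A
    using p01[OF that(1)] measure_return[OF that(2)] by (simp add: qu)
  have comp_in: "kl_comp Y g0 (quot_unit X p) x = scale_measure (ennreal (1 - p x)) (g0 x)"
    if g0: "kl_hom (quot X p) Y g0" and x: "x \<in> Q" for g0 x
  proof -
    have xq: "x \<in> space (quot X p)" using spq x by simp
    have g0x: "g0 x \<in> subprobs Y" using kl_hom_in[OF g0 xq] .
    have "kl_comp Y g0 (quot_unit X p) x = measure_of (space Y) (sets Y) (\<lambda>N. ennreal (1 - p x) * emeasure (g0 x) N)"
      unfolding kl_comp_def
    proof (rule measure_of_eq[OF sets.space_closed])
      fix N assume "N \<in> sigma_sets (space Y) (sets Y)"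
      hence N: "N \<in> sets Y" by (simp add: sets.sigma_sets_eq)
      have m: "(\<lambda>z. emeasure (g0 z) N) \<in> borel_measurable (return (quot X p) x)"
        using kl_hom_eval(2)[OF g0 N] by simp
      show "(\<integral>\<^sup>+ y. emeasure (g0 y) N \<partial>quot_unit X p x) = ennreal (1 - p x) * emeasure (g0 x) N"
        unfolding qu nn_integral_scale_measure[OF m] nn_integral_return[OF xq kl_hom_eval(2)[OF g0 N]] ..
    qed
    also have "\<dots> = scale_measure (ennreal (1 - p x)) (g0 x)"
      unfolding scale_measure_def using subprobs_D(1,2)[OF g0x] by simp
    finally show ?thesis .
  qed
  have comp_out: "kl_comp Y g0 (quot_unit X p) x = measure_of (space Y) (sets Y) (\<lambda>N. 0)"
    if g0: "kl_hom (quot X p) Y g0" and x: "x \<in> space X" "x \<notin> Q" for g0 x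
  proof -
    have px: "p x = 1" using x by (simp add: Q_def)
    show ?thesis
      unfolding kl_comp_def
    proof (rule measure_of_eq[OF sets.space_closed])
      fix N assume "N \<in> sigma_sets (space Y) (sets Y)"
      hence N: "N \<in> sets Y" by (simp add: sets.sigma_sets_eq)
      have m: "(\<lambda>z. emeasure (g0 z) N) \<in> borel_measurable (return (quot X p) x)"
        using kl_hom_eval(2)[OF g0 N] by simp
      show "(\<integral>\<^sup>+ y. emeasure (g0 y) N \<partial>quot_unit X p x) = 0"
        unfolding qu nn_integral_scale_measure[OF m] px by simp
    qed
  qed
  show ?thesis
  proof (intro conjI allI impI)
    show "groth_hom X p (quot X p) (\<lambda>_. 0) (quot_unit X p)"
      unfolding groth_hom_def
    proof (intro conjI ballI)
      show "kl_hom X (quot X p) (quot_unit X p)"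
      proof (rule kl_homI)
        fix x assume x: "x \<in> space X"
        have "emeasure (quot_unit X p x) (space (quot_unit X p x)) = ennreal (1 - p x) * indicator Q x"
          using setsq[of Q] Q by (simp add: qu space_scale_measure spq)
        also have "\<dots> \<le> 1"
          using p01[OF x] by (cases "x \<in> Q") (auto simp: ennreal_le_1)
        finally show "quot_unit X p x \<in> subprobs (quot X p)" by (simp add: subprobs_def qu)
      next
        fix A assume A: "A \<in> sets (quot X p)"
        hence A': "A \<in> sets X" using setsq by auto
        have "(\<lambda>x. (1 - p x) * indicator A x) \<in> borel_measurable X"
          by (intro borel_measurable_times borel_measurable_diff borel_measurable_const pm borel_measurable_indicator A')
        thus "(\<lambda>x. measure (quot_unit X p x) A) \<in> borel_measurable X"
          by (rule measurable_cong[THEN iffD1, rotated]) (simp add: mqu A)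
      qed
      fix x assume x: "x \<in> space X"
      have "measure (quot_unit X p x) (space (quot X p)) = (1 - p x) * indicator Q x"
        using mqu[OF x sets.top] spq by simp
      thus "p x \<le> box (quot X p) (quot_unit X p) (\<lambda>_. 0) x"
        unfolding box_def using x by (cases "x \<in> Q") (auto simp: Q_def)
    qed
    fix f assume fh: "groth_hom X p Y (\<lambda>_. 0) f"
    have f: "kl_hom X Y f" and fb: "\<And>x. x \<in> space X \<Longrightarrow> measure (f x) (space Y) \<le> 1 - p x"
      using fh by (auto simp: groth_hom_def box_def)
    define g where "g y = scale_measure (ennreal (1 / (1 - p y))) (f y)" for y
    have gk: "kl_hom (quot X p) Y g"
    proof (rule kl_homI)
      fix y assume "y \<in> space (quot X p)"
      hence y: "y \<in> Q" "y \<in> space X" using spq QX by auto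
      have fy: "f y \<in> subprobs Y" using kl_hom_in[OF f y(2)] .
      have pos: "0 < 1 - p y" using pl1[OF y(1)] by simp
      have "emeasure (g y) (space (g y)) = ennreal (1 / (1 - p y)) * ennreal (measure (f y) (space Y))"
        by (simp add: g_def space_scale_measure subprobs_D(2,6)[OF fy])
      also have "\<dots> = ennreal (measure (f y) (space Y) / (1 - p y))"
        using pos by (simp add: ennreal_mult[symmetric])
      also have "\<dots> \<le> 1" using fb[OF y(2)] pos by (simp add: ennreal_le_1)
      finally show "g y \<in> subprobs Y" using subprobs_D(1)[OF fy] by (simp add: subprobs_def g_def)
    next
      fix A assume A: "A \<in> sets Y"
      have "(\<lambda>y. 1 / (1 - p y) * measure (f y) A) \<in> borel_measurable X"
        by (intro borel_measurable_times borel_measurable_divide borel_measurable_diff borel_measurable_const pm kl_hom_eval(1)[OF f A])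
      hence "(\<lambda>y. 1 / (1 - p y) * measure (f y) A) \<in> borel_measurable (quot X p)"
        unfolding c by (rule measurable_restrict_space1)
      thus "(\<lambda>y. measure (g y) A) \<in> borel_measurable (quot X p)"
      proof (rule measurable_cong[THEN iffD1, rotated])
        fix y assume "y \<in> space (quot X p)"
        hence "y \<in> Q" using spq by simp
        hence "0 \<le> 1 / (1 - p y)" using pl1[of y] by simp
        thus "1 / (1 - p y) * measure (f y) A = measure (g y) A" by (simp add: g_def)
      qed
    qed
    show "\<exists>g. kl_hom (quot X p) Y g \<and> kl_eq X (kl_comp Y g (quot_unit X p)) f \<and>
           (\<forall>g'. kl_hom (quot X p) Y g' \<and> kl_eq X (kl_comp Y g' (quot_unit X p)) f
                  \<longrightarrow> kl_eq (quot X p) g' g)"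
    proof (intro exI conjI allI impI)
      show "kl_hom (quot X p) Y g" by (rule gk)
      show gc: "kl_eq X (kl_comp Y g (quot_unit X p)) f" unfolding kl_eq_def
      proof
        fix x assume x: "x \<in> space X"
        have fx: "f x \<in> subprobs Y" using kl_hom_in[OF f x] .
        show "kl_comp Y g (quot_unit X p) x = f x"
        proof (cases "x \<in> Q")
          case True
          have pos: "0 < 1 - p x" using pl1[OF True] by simp
          have "ennreal (1 - p x) * ennreal (1 / (1 - p x)) = 1" using pos by (simp add: ennreal_mult[symmetric])
          thus ?thesis using comp_in[OF gk True] by (simp add: g_def)
        next
          case False
          have px: "p x = 1" using False x by (simp add: Q_def)
          have z: "emeasure (f x) N = 0" if N: "N \<in> sets Y" for N
          proof -
            have "emeasure (f x) N \<le> emeasure (f x) (space Y)"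
              using emeasure_space[of "f x" N] subprobs_D(2)[OF fx] by simp
            also have "\<dots> = ennreal (measure (f x) (space Y))" by (rule subprobs_D(6)[OF fx])
            also have "\<dots> = 0" using fb[OF x] px measure_nonneg[of "f x" "space Y"] by simp
            finally show ?thesis by simp
          qed
          have "measure_of (space Y) (sets Y) (\<lambda>N. 0) = measure_of (space Y) (sets Y) (emeasure (f x))"
            by (rule measure_of_eq[OF sets.space_closed]) (simp add: sets.sigma_sets_eq z)
          also have "\<dots> = f x" using measure_of_of_measure[of "f x"] subprobs_D(1,2)[OF fx] by simp
          finally show ?thesis using comp_out[OF gk x False] by simp
        qed
      qed
      fix g' assume "kl_hom (quot X p) Y g' \<and> kl_eq X (kl_comp Y g' (quot_unit X p)) f"
      hence g': "kl_hom (quot X p) Y g'" and e: "\<And>x. x \<in> space X \<Longrightarrow> kl_comp Y g' (quot_unit X p) x = f x"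
        by (auto simp: kl_eq_def)
      show "kl_eq (quot X p) g' g" unfolding kl_eq_def
      proof
        fix y assume "y \<in> space (quot X p)"
        hence y: "y \<in> Q" "y \<in> space X" using spq QX by auto
        have pos: "0 < 1 - p y" using pl1[OF y(1)] by simp
        have "scale_measure (ennreal (1 - p y)) (g' y) = scale_measure (ennreal (1 - p y)) (g y)"
          using comp_in[OF g' y(1)] comp_in[OF gk y(1)] e[OF y(2)] gc y(2) by (simp add: kl_eq_def)
        hence "scale_measure (ennreal (1 / (1 - p y))) (scale_measure (ennreal (1 - p y)) (g' y)) =
               scale_measure (ennreal (1 / (1 - p y))) (scale_measure (ennreal (1 - p y)) (g y))" by simp
        thus "g' y = g y" unfolding scale_inv[OF pos] .
      qed
    qed
  qed
qed

theorem proposition4p2: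
  fixes X :: "'a measure" and Y :: "'b measure"
  shows
  \<comment> \<open>0 \<turnstile> U: universal arrow id_X : X \<rightarrow> U(X,0)\<close>
  "(pred_on X (\<lambda>_. 0) \<and> kl_hom X X (kl_id X) \<and>
     (\<forall>q f. pred_on Y q \<longrightarrow> kl_hom X Y f \<longrightarrow>
        (\<exists>g. groth_hom X (\<lambda>_. 0) Y q g \<and> kl_eq X (kl_comp Y g (kl_id X)) f \<and>
           (\<forall>g'. groth_hom X (\<lambda>_. 0) Y q g' \<and> kl_eq X (kl_comp Y g' (kl_id X)) f
                  \<longrightarrow> kl_eq X g' g))))
   \<and>
  \<comment> \<open>U \<turnstile> 1: universal arrow id_Y : U(Y,1) \<rightarrow> Y\<close>
   (pred_on Y (\<lambda>_. 1) \<and> kl_hom Y Y (kl_id Y) \<and>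
     (\<forall>p f. pred_on X p \<longrightarrow> kl_hom X Y f \<longrightarrow>
        (\<exists>g. groth_hom X p Y (\<lambda>_. 1) g \<and> kl_eq X (kl_comp Y (kl_id Y) g) f \<and>
           (\<forall>g'. groth_hom X p Y (\<lambda>_. 1) g' \<and> kl_eq X (kl_comp Y (kl_id Y) g') f
                  \<longrightarrow> kl_eq X g' g))))
   \<and>
  \<comment> \<open>1 \<turnstile> comprehension: universal arrow (inclusion) 1({X|p}) \<rightarrow> (X,p)\<close>
   (\<forall>p. pred_on X p \<longrightarrow>
      groth_hom (cmpr X p) (\<lambda>_. 1) X p (cmpr_counit X p) \<and>
      (\<forall>(g :: 'b \<Rightarrow> 'a measure). groth_hom Y (\<lambda>_. 1) X p g \<longrightarrow>
        (\<exists>h. kl_hom Y (cmpr X p) h \<and> kl_eq Y (kl_comp X (cmpr_counit X p) h) g \<and>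
           (\<forall>h'. kl_hom Y (cmpr X p) h' \<and> kl_eq Y (kl_comp X (cmpr_counit X p) h') g
                  \<longrightarrow> kl_eq Y h' h))))
   \<and>
  \<comment> \<open>quotient \<turnstile> 0: universal arrow (X,p) \<rightarrow> (X/p, 0)\<close>
   (\<forall>p. pred_on X p \<longrightarrow>
      groth_hom X p (quot X p) (\<lambda>_. 0) (quot_unit X p) \<and>
      (\<forall>f. groth_hom X p Y (\<lambda>_. 0) f \<longrightarrow>
        (\<exists>g. kl_hom (quot X p) Y g \<and> kl_eq X (kl_comp Y g (quot_unit X p)) f \<and>
           (\<forall>g'. kl_hom (quot X p) Y g' \<and> kl_eq X (kl_comp Y g' (quot_unit X p)) f
                  \<longrightarrow> kl_eq (quot X p) g' g))))"
    using part1[of X Y] part2[of Y X] part3[of X _ Y] part4[of X _ Y] by blast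

end
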